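(* Let $p$ be a prime and $m$ a positive integer with $m+2\le p$. Let $B$ be a finite left brace with $$(B,+)\cong \mathbb{Z}/(p^{\alpha_1})\times\cdots\times\mathbb{Z}/(p^{\alpha_m})$$ for integers $1\le\alpha_1\le\alpha_2\le\cdots\le\alpha_m$. Then $o_{\cdot}(x)=o_{+}(x)$ for every $x\in B$. Moreover, if $(B,\cdot)$ is abelian, then $(B,\cdot)\cong(B,+)$. In particular, if $|B|=p^n$ (and $(B,+)$ is any abelian group of that order) with $n+2\le p$, then $o_{\cdot}(x)=o_{+}(x)$ for every $x\in B$.
   Context: A left brace is a set $B$ with two binary operations $+$ and $\cdot$ such that $(B,+)$ is an abelian group, $(B,\cdot)$ is a group, and $a\cdot(b+c)+a=a\cdot b+a\cdot c$ for all $a,b,c\in B$. For $x\in B$, $o_{\cdot}(x)$ denotes the order of $x$ in the group $(B,\cdot)$ and $o_{+}(x)$ denotes the order of $x$ in the group $(B,+)$. *)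

theory Defs
  imports "HOL-Algebra.Algebra" "HOL-Computational_Algebra.Primes"
begin

definition left_brace :: "'a monoid \<Rightarrow> 'a monoid \<Rightarrow> bool" where
  "left_brace A M \<longleftrightarrow> comm_group A \<and> group M \<and> carrier M = carrier A \<and>
     (\<forall>a\<in>carrier A. \<forall>b\<in>carrier A. \<forall>c\<in>carrier A.
        (a \<otimes>\<^bsub>M\<^esub> (b \<otimes>\<^bsub>A\<^esub> c)) \<otimes>\<^bsub>A\<^esub> a
          = (a \<otimes>\<^bsub>M\<^esub> b) \<otimes>\<^bsub>A\<^esub> (a \<otimes>\<^bsub>M\<^esub> c))"

end

theory Submission
  imports Defs
begin

primrec gs :: "('a,'b) monoid_scheme \<Rightarrow> (nat \<Rightarrow> 'a) \<Rightarrow> nat \<Rightarrow> 'a" where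
  "gs G f 0 = \<one>\<^bsub>G\<^esub>"
| "gs G f (Suc n) = gs G f n \<otimes>\<^bsub>G\<^esub> f n"

context comm_group begin

lemma gs_closed: "(\<And>i. i < n \<Longrightarrow> f i \<in> carrier G) \<Longrightarrow> gs G f n \<in> carrier G"
  by (induct n) auto

lemma gs_cong: "(\<And>i. i < n \<Longrightarrow> f i = g i) \<Longrightarrow> gs G f n = gs G g n"
  by (induct n) auto

lemma gs_one: "(\<And>i. i < n \<Longrightarrow> f i = \<one>) \<Longrightarrow> gs G f n = \<one>"
  by (induct n) auto

lemma gs_mult:
  assumes "\<And>i. i < n \<Longrightarrow> f i \<in> carrier G" "\<And>i. i < n \<Longrightarrow> g i \<in> carrier G"
  shows "gs G (\<lambda>i. f i \<otimes> g i) n = gs G f n \<otimes> gs G g n"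
  using assms
proof (induct n)
  case (Suc n)
  have a: "gs G f n \<in> carrier G" "gs G g n \<in> carrier G" "f n \<in> carrier G" "g n \<in> carrier G"
    using Suc.prems by (auto intro: gs_closed)
  have "gs G (\<lambda>i. f i \<otimes> g i) n = gs G f n \<otimes> gs G g n"
    using Suc by auto
  then show ?case using a by (simp add: m_ac)
qed simp

lemma gs_shift:
  assumes "\<And>i. i < Suc n \<Longrightarrow> f i \<in> carrier G"
  shows "gs G f (Suc n) = f 0 \<otimes> gs G (\<lambda>i. f (Suc i)) n"
  using assms
proof (induct n)
  case 0 then show ?case by simp
next
  case (Suc n)
  have a: "gs G (\<lambda>i. f (Suc i)) n \<in> carrier G" "f 0 \<in> carrier G" "f (Suc n) \<in> carrier G"
    using Suc.prems by (auto intro: gs_closed)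
  have "gs G f (Suc n) = f 0 \<otimes> gs G (\<lambda>i. f (Suc i)) n"
    using Suc by auto
  then show ?case using a by (simp add: m_assoc)
qed

lemma gs_hom:
  assumes "\<And>x. x \<in> carrier G \<Longrightarrow> \<phi> x \<in> carrier G"
    "\<And>x y. x \<in> carrier G \<Longrightarrow> y \<in> carrier G \<Longrightarrow> \<phi> (x \<otimes> y) = \<phi> x \<otimes> \<phi> y"
    "\<phi> \<one> = \<one>" "\<And>i. i < n \<Longrightarrow> f i \<in> carrier G"
  shows "\<phi> (gs G f n) = gs G (\<lambda>i. \<phi> (f i)) n"
  using assms(4)
proof (induct n)
  case (Suc n)
  then show ?case using assms(1-3) gs_closed[of n f] by auto
qed (simp add: assms)

lemma gs_pow:
  assumes "\<And>i. i < n \<Longrightarrow> f i \<in> carrier G"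
  shows "(gs G f n) [^] (k::nat) = gs G (\<lambda>i. f i [^] k) n"
  by (rule gs_hom[where \<phi>="\<lambda>x. x [^] k"]) (auto simp: nat_pow_distrib assms)

end

primrec Sp :: "('a,'b) monoid_scheme \<Rightarrow> ('a \<Rightarrow> 'a) \<Rightarrow> nat \<Rightarrow> 'a \<Rightarrow> 'a" where
  "Sp G h 0 z = \<one>\<^bsub>G\<^esub>"
| "Sp G h (Suc n) z = z \<otimes>\<^bsub>G\<^esub> h (Sp G h n z)"

locale gendo = comm_group G for G (structure) +
  fixes h :: "'a \<Rightarrow> 'a"
  assumes h_closed: "x \<in> carrier G \<Longrightarrow> h x \<in> carrier G"
      and h_mult: "x \<in> carrier G \<Longrightarrow> y \<in> carrier G \<Longrightarrow> h (x \<otimes> y) = h x \<otimes> h y"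
begin

definition T where "T x = h x \<otimes> inv x"

lemma h_one: "h \<one> = \<one>"
proof -
  have "h \<one> \<otimes> h \<one> = h \<one> \<otimes> \<one>" using h_mult[of \<one> \<one>] h_closed[of \<one>] by simp
  then show ?thesis using h_closed[of \<one>] by (metis l_cancel one_closed)
qed

lemma T_closed: "x \<in> carrier G \<Longrightarrow> T x \<in> carrier G"
  by (simp add: T_def h_closed)

lemma T_mult: "x \<in> carrier G \<Longrightarrow> y \<in> carrier G \<Longrightarrow> T (x \<otimes> y) = T x \<otimes> T y"
  by (simp add: T_def h_mult inv_mult h_closed m_ac)

lemma T_one: "T \<one> = \<one>"
  by (simp add: T_def h_one)

lemma h_T: "x \<in> carrier G \<Longrightarrow> h x = x \<otimes> T x"
proof -
  assume x: "x \<in> carrier G"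
  then have "x \<otimes> T x = h x \<otimes> (x \<otimes> inv x)" unfolding T_def using x by (intro m_lcomm) (auto simp: h_closed)
  then show ?thesis using x h_closed by simp
qed

lemma Tn_closed: "x \<in> carrier G \<Longrightarrow> (T ^^ j) x \<in> carrier G"
  by (induct j) (auto simp: T_closed)

lemma Tn_mult: "x \<in> carrier G \<Longrightarrow> y \<in> carrier G \<Longrightarrow> (T ^^ j) (x \<otimes> y) = (T ^^ j) x \<otimes> (T ^^ j) y"
  by (induct j) (auto simp: T_mult Tn_closed)

lemma Tn_one: "(T ^^ j) \<one> = \<one>"
  by (induct j) (auto simp: T_one)

lemma T_pow: "x \<in> carrier G \<Longrightarrow> T (x [^] (k::nat)) = T x [^] k"
  by (induct k) (auto simp: T_one T_mult)

lemma Tn_pow: "x \<in> carrier G \<Longrightarrow> (T ^^ j) (x [^] (k::nat)) = (T ^^ j) x [^] k"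
  by (induct j) (auto simp: T_pow Tn_closed)

lemma Tn_add: "x \<in> carrier G \<Longrightarrow> (T ^^ i) ((T ^^ j) x) = (T ^^ (i + j)) x"
  by (simp add: funpow_add)

lemma h_pow: "x \<in> carrier G \<Longrightarrow> h (x [^] (k::nat)) = h x [^] k"
  by (induct k) (auto simp: h_one h_mult h_closed)

lemma binom1: "z \<in> carrier G \<Longrightarrow> (h ^^ n) z = gs G (\<lambda>j. (T ^^ j) z [^] (n choose j)) (Suc n)"
proof (induct n)
  case 0 then show ?case by simp
next
  case (Suc n)
  let ?f = "\<lambda>j. (T ^^ j) z [^] (n choose j)"
  let ?g = "\<lambda>j. (T ^^ Suc j) z [^] (n choose Suc j)"
  have cf: "\<And>j. ?f j \<in> carrier G" "\<And>j. ?g j \<in> carrier G" "\<And>j. (T ^^ Suc j) z [^] (n choose j) \<in> carrier G"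
    using Suc.prems Tn_closed T_closed by auto
  have "(h ^^ Suc n) z = h (gs G ?f (Suc n))" using Suc by simp
  also have "\<dots> = gs G ?f (Suc n) \<otimes> T (gs G ?f (Suc n))"
    by (rule h_T, rule gs_closed, rule cf)
  also have "T (gs G ?f (Suc n)) = gs G (\<lambda>j. T (?f j)) (Suc n)"
    by (rule gs_hom) (auto simp: T_closed T_mult T_one cf)
  also have "gs G (\<lambda>j. T (?f j)) (Suc n) = gs G (\<lambda>j. (T ^^ Suc j) z [^] (n choose j)) (Suc n)"
    by (rule gs_cong) (simp add: T_pow Tn_closed Suc.prems)
  also have "gs G ?f (Suc n) = z \<otimes> gs G ?g n"
    using gs_shift[of n ?f, OF cf(1)] Suc.prems by (simp del: gs.simps)
  finally have L: "(h ^^ Suc n) z = z \<otimes> gs G ?g n \<otimes> gs G (\<lambda>j. (T ^^ Suc j) z [^] (n choose j)) (Suc n)" .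
  have "gs G (\<lambda>j. (T ^^ j) z [^] (Suc n choose j)) (Suc (Suc n))
      = z \<otimes> gs G (\<lambda>j. (T ^^ Suc j) z [^] (Suc n choose Suc j)) (Suc n)"
    using gs_shift[of "Suc n" "\<lambda>j. (T ^^ j) z [^] (Suc n choose j)"] Tn_closed Suc.prems by simp
  also have "gs G (\<lambda>j. (T ^^ Suc j) z [^] (Suc n choose Suc j)) (Suc n)
      = gs G (\<lambda>j. (T ^^ Suc j) z [^] (n choose j) \<otimes> ?g j) (Suc n)"
    by (rule gs_cong) (simp add: nat_pow_mult Tn_closed Suc.prems del: funpow.simps)
  also have "\<dots> = gs G (\<lambda>j. (T ^^ Suc j) z [^] (n choose j)) (Suc n) \<otimes> gs G ?g (Suc n)"
    by (rule gs_mult) (auto simp: cf T_closed Tn_closed Suc.prems)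
  also have "gs G ?g (Suc n) = gs G ?g n"
    using gs_closed[of n ?g] cf by (simp add: binomial_eq_0)
  finally show ?case unfolding L
    using gs_closed[of n ?g] gs_closed[of "Suc n" "\<lambda>j. (T ^^ Suc j) z [^] (n choose j)"] cf Suc.prems
    by (simp add: m_ac)
qed

lemma binom2: "z \<in> carrier G \<Longrightarrow> Sp G h n z = gs G (\<lambda>j. (T ^^ j) z [^] (n choose Suc j)) n"
proof (induct n)
  case 0 then show ?case by simp
next
  case (Suc n)
  let ?f = "\<lambda>j. (T ^^ j) z [^] (n choose Suc j)"
  let ?g = "\<lambda>j. (T ^^ j) z [^] (n choose j)"
  have cf: "\<And>j. ?f j \<in> carrier G" "\<And>j. ?g j \<in> carrier G" "\<And>j. (T ^^ Suc j) z [^] (n choose Suc j) \<in> carrier G"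
    using Suc.prems Tn_closed T_closed by auto
  have "Sp G h (Suc n) z = z \<otimes> h (gs G ?f n)" using Suc by simp
  also have "h (gs G ?f n) = gs G ?f n \<otimes> T (gs G ?f n)"
    by (rule h_T, rule gs_closed, rule cf)
  also have "T (gs G ?f n) = gs G (\<lambda>j. T (?f j)) n"
    by (rule gs_hom) (auto simp: T_closed T_mult T_one cf)
  also have "gs G (\<lambda>j. T (?f j)) n = gs G (\<lambda>j. (T ^^ Suc j) z [^] (n choose Suc j)) n"
    by (rule gs_cong) (simp add: T_pow Tn_closed Suc.prems)
  finally have L: "Sp G h (Suc n) z = z \<otimes> (gs G ?f n \<otimes> gs G (\<lambda>j. (T ^^ Suc j) z [^] (n choose Suc j)) n)" .
  have "gs G (\<lambda>j. (T ^^ j) z [^] (Suc n choose Suc j)) (Suc n)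
      = gs G (\<lambda>j. ?g j \<otimes> ?f j) (Suc n)"
    by (rule gs_cong) (simp add: nat_pow_mult Tn_closed Suc.prems del: funpow.simps)
  also have "\<dots> = gs G ?g (Suc n) \<otimes> gs G ?f (Suc n)"
    by (rule gs_mult) (auto simp: cf T_closed Tn_closed Suc.prems)
  also have "gs G ?f (Suc n) = gs G ?f n"
    using gs_closed[of n ?f] cf by (simp add: binomial_eq_0)
  also have "gs G ?g (Suc n) = z \<otimes> gs G (\<lambda>j. (T ^^ Suc j) z [^] (n choose Suc j)) n"
    using gs_shift[of n ?g, OF cf(2)] Suc.prems by (simp del: gs.simps)
  finally show ?case unfolding L
    using gs_closed[of n ?f] gs_closed[of n "\<lambda>j. (T ^^ Suc j) z [^] (n choose Suc j)"] cf Suc.prems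
    by (simp add: m_ac)
qed

end


lemma prime_dvd_choose_pow:
  fixes p :: nat
  assumes p: "Factorial_Ring.prime p" and j: "0 < j" "j < p ^ N"
  shows "p dvd (p ^ N choose j)"
proof (rule ccontr)
  assume nd: "\<not> p dvd (p ^ N choose j)"
  obtain k where k: "j = Suc k" using j by (cases j) auto
  obtain n where n: "p ^ N = Suc n" using j by (cases "p ^ N") auto
  have eq: "j * (p ^ N choose j) = p ^ N * (n choose k)"
    using Suc_times_binomial[of k n] k n by simp
  have "coprime (p ^ N) (p ^ N choose j)"
    using nd p by (simp add: prime_imp_coprime coprime_commute)
  moreover have "p ^ N dvd j * (p ^ N choose j)" using eq by simp
  ultimately have "p ^ N dvd j" by (simp add: coprime_dvd_mult_left_iff)
  then show False using j by (simp add: nat_dvd_not_less)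
qed

lemma (in gendo) Tn_inv: "x \<in> carrier G \<Longrightarrow> (T ^^ i) (inv x) = inv ((T ^^ i) x)"
proof -
  assume x: "x \<in> carrier G"
  have "(T ^^ i) (inv x) \<otimes> (T ^^ i) x = \<one>"
    using Tn_mult[of "inv x" x i] x by (simp add: Tn_one)
  then show ?thesis using x by (metis Tn_closed inv_equality inv_closed)
qed

lemma (in gendo) Sp_closed: "z \<in> carrier G \<Longrightarrow> Sp G h n z \<in> carrier G"
  by (induct n) (auto simp: h_closed)

lemma (in gendo) Sp_pow: "z \<in> carrier G \<Longrightarrow> Sp G h n (z [^] (k::nat)) = (Sp G h n z) [^] k"
  by (induct n) (auto simp: h_pow Sp_closed h_closed nat_pow_distrib)

locale keyloc = gendo +
  fixes p N :: nat
  assumes fin: "finite (carrier G)"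
    and pp: "Factorial_Ring.prime p"
    and ordG: "order G = p ^ N"
    and hq: "\<And>x. x \<in> carrier G \<Longrightarrow> (h ^^ (p ^ N)) x = x"
    and small: "card {x \<in> carrier G. x [^] p = \<one>} \<le> p ^ (p - 2)"
begin

abbreviation "Gp \<equiv> {x \<in> carrier G. x [^] p = \<one>}"

lemma p2: "2 \<le> p" using pp prime_ge_2_nat by blast

lemma Gp_Tn: "x \<in> Gp \<Longrightarrow> (T ^^ i) x \<in> Gp"
  by (auto simp: Tn_closed simp flip: Tn_pow intro: Tn_one)

lemma pow_p_mult_one: "x \<in> Gp \<Longrightarrow> p dvd c \<Longrightarrow> x [^] c = \<one>"
  by (auto simp: nat_pow_pow[symmetric] elim!: dvdE)

lemma nilp: "x \<in> Gp \<Longrightarrow> (T ^^ (p ^ N)) x = \<one>"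
proof -
  assume x: "x \<in> Gp"
  let ?q = "p ^ N"
  let ?f = "\<lambda>j. (T ^^ j) x [^] (?q choose j)"
  have xc: "x \<in> carrier G" using x by auto
  have cf: "\<And>j. ?f j \<in> carrier G" using xc Tn_closed by auto
  obtain q' where q': "?q = Suc q'" using pp by (metis not0_implies_Suc power_not_zero prime_gt_0_nat less_numeral_extra(3) zero_less_iff_neq_zero)
  have mid: "gs G (\<lambda>i. ?f (Suc i)) q' = \<one>"
  proof (rule gs_one)
    fix i assume i: "i < q'"
    have "p dvd (?q choose Suc i)" using prime_dvd_choose_pow[OF pp, of "Suc i" N] i q' by simp
    then show "?f (Suc i) = \<one>" using Gp_Tn[OF x, of "Suc i"] pow_p_mult_one by blast
  qed
  have "x = (h ^^ ?q) x" using hq xc by simp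
  also have "\<dots> = gs G ?f (Suc ?q)" by (rule binom1[OF xc])
  also have "\<dots> = gs G ?f ?q \<otimes> (T ^^ ?q) x" using xc Tn_closed by simp
  also have "gs G ?f ?q = x"
  proof -
    have e: "gs G ?f (Suc q') = x" using gs_shift[of q' ?f, OF cf] mid xc by (simp del: gs.simps)
    have "gs G ?f ?q = gs G ?f (Suc q')" using q' by (rule arg_cong)
    then show ?thesis using e by simp
  qed
  finally have "x \<otimes> \<one> = x \<otimes> (T ^^ ?q) x" using xc by simp
  then show ?thesis using xc Tn_closed by (metis l_cancel one_closed)
qed

definition K :: "nat \<Rightarrow> 'a set" where "K i = {x \<in> Gp. (T ^^ i) x = \<one>}"

lemma K_sub: "subgroup (K i) G"
proof (rule subgroupI)
  show "K i \<subseteq> carrier G" by (auto simp: K_def)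
  have "\<one> \<in> K i" by (simp add: K_def Tn_one)
  then show "K i \<noteq> {}" by blast
  show "inv a \<in> K i" if "a \<in> K i" for a
    using that by (auto simp: K_def Tn_inv nat_pow_inv)
  show "a \<otimes> b \<in> K i" if "a \<in> K i" "b \<in> K i" for a b
    using that by (auto simp: K_def Tn_mult nat_pow_distrib)
qed

lemma K_card_dvd: "card (K i) dvd p ^ N"
  using lagrange[OF K_sub[of i]] ordG by (metis dvd_triv_right)

lemma K_card_pow: "\<exists>e. card (K i) = p ^ e"
  using K_card_dvd[of i] divides_primepow_nat[OF pp] by blast

lemma K_mono: "i \<le> j \<Longrightarrow> K i \<subseteq> K j"
proof
  fix x assume ij: "i \<le> j" and x: "x \<in> K i"
  obtain n where n: "j = n + i" using ij by (metis le_add_diff_inverse2)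
  have "(T ^^ j) x = (T ^^ n) ((T ^^ i) x)" by (simp add: n funpow_add)
  then show "x \<in> K j" using x by (simp add: K_def Tn_one)
qed

lemma K_fin: "finite (K i)"
  using fin by (rule rev_finite_subset) (auto simp: K_def)

lemma K_Gp: "K i \<subseteq> Gp" by (auto simp: K_def)

lemma K_stable: assumes "K i = K (Suc i)" shows "K (Suc i + t) \<subseteq> K i"
proof (induct t)
  case 0 then show ?case using assms by simp
next
  case (Suc t)
  show ?case
  proof
    fix z assume z: "z \<in> K (Suc i + Suc t)"
    then have zG: "z \<in> Gp" by (auto simp: K_def)
    have "(T ^^ (Suc i + t)) (T z) = (T ^^ (Suc i + Suc t)) z"
      by (simp add: funpow_swap1)
    then have "T z \<in> K (Suc i + t)" using z Gp_Tn[OF zG, of 1] by (auto simp: K_def)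
    then have "T z \<in> K i" using Suc by blast
    then have "(T ^^ Suc i) z = \<one>" by (simp add: K_def funpow_swap1)
    then have "z \<in> K (Suc i)" using zG by (simp add: K_def)
    then show "z \<in> K i" using assms by simp
  qed
qed

lemma K_big: "K (p ^ N) = Gp"
  using nilp by (auto simp: K_def)

lemma K_chain: "K i = Gp \<or> p ^ i \<le> card (K i)"
proof (induct i)
  case 0
  have "\<one> \<in> K 0" by (simp add: K_def)
  then have "card (K 0) \<ge> 1" using K_fin[of 0] by (metis One_nat_def Suc_leI card_gt_0_iff empty_iff)
  then show ?case by simp
next
  case (Suc i)
  show ?case
  proof (cases "K i = Gp")
    case True
    then show ?thesis using K_mono[of i "Suc i"] K_Gp[of "Suc i"] by auto
  next
    case False
    with Suc have ci: "p ^ i \<le> card (K i)" by simp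
    have neq: "K i \<noteq> K (Suc i)"
    proof
      assume eq: "K i = K (Suc i)"
      show False
      proof (cases "p ^ N \<le> i")
        case True
        then have "Gp \<subseteq> K i" using K_mono[of "p^N" i] K_big by auto
        then show False using False K_Gp by auto
      next
        case False
        then obtain t where "p ^ N = Suc i + t" by (metis le_Suc_ex not_le Suc_leI)
        then have "Gp \<subseteq> K i" using K_stable[OF eq, of t] K_big by auto
        then show False using \<open>K i \<noteq> Gp\<close> K_Gp by auto
      qed
    qed
    have lt: "card (K i) < card (K (Suc i))"
      using neq K_mono[of i "Suc i"] K_fin by (simp add: psubset_card_mono psubset_eq)
    obtain a where a: "card (K i) = p ^ a" using K_card_pow by blast
    obtain b where b: "card (K (Suc i)) = p ^ b" using K_card_pow by blast
    have "a < b" using lt a b p2 by (metis power_strict_increasing_iff Suc_1 Suc_le_lessD)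
    have "i \<le> a" using ci a p2 by (metis power_le_imp_le_exp Suc_1 Suc_le_lessD)
    then have "Suc i \<le> b" using \<open>a < b\<close> by simp
    then have "p ^ Suc i \<le> p ^ b" using p2 by (intro power_increasing) auto
    then have "p ^ Suc i \<le> card (K (Suc i))" using b by simp
    then show ?thesis by simp
  qed
qed

end


context keyloc begin

lemma Tp2: "x \<in> Gp \<Longrightarrow> (T ^^ (p - 2)) x = \<one>"
proof -
  assume x: "x \<in> Gp"
  have "K (p - 2) = Gp"
  proof (cases "K (p - 2) = Gp")
    case False
    then have "p ^ (p - 2) \<le> card (K (p - 2))" using K_chain by blast
    then have "card Gp \<le> card (K (p - 2))" using small by linarith
    moreover have "finite Gp" using fin by auto
    ultimately show ?thesis using K_Gp by (simp add: card_seteq)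
  qed
  then show ?thesis using x by (auto simp: K_def)
qed

lemma key_lr:
  assumes z: "z \<in> carrier G" "z [^] p = \<one>"
  shows "Sp G h p z = \<one>"
proof -
  have zG: "z \<in> Gp" using z by simp
  have "Sp G h p z = gs G (\<lambda>j. (T ^^ j) z [^] (p choose Suc j)) p" by (rule binom2[OF z(1)])
  also have "\<dots> = \<one>"
  proof (rule gs_one)
    fix j assume j: "j < p"
    show "(T ^^ j) z [^] (p choose Suc j) = \<one>"
    proof (cases "Suc j < p")
      case True
      have "p dvd (p choose Suc j)" using dvd_choose_prime[OF True _ _ pp] p2 by simp
      then show ?thesis using Gp_Tn[OF zG] pow_p_mult_one by blast
    next
      case False
      then have jj: "j = Suc (p - 2)" using j p2 by simp
      have "(T ^^ j) z = T ((T ^^ (p - 2)) z)" using jj by simp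
      also have "\<dots> = \<one>" using Tp2[OF zG] T_one by simp
      finally show ?thesis by simp
    qed
  qed
  finally show ?thesis .
qed

lemma key_dir:
  assumes w: "w \<in> carrier G" "w [^] p \<noteq> \<one>" "w [^] (p * p) = \<one>"
  shows "Sp G h p w \<noteq> \<one>"
proof
  assume S: "Sp G h p w = \<one>"
  define u where "u = w [^] p"
  have uG: "u \<in> Gp" using w by (simp add: u_def nat_pow_pow)
  have u1: "u \<noteq> \<one>" using w u_def by simp
  define d where "d = (LEAST d. (T ^^ d) u = \<one>)"
  have ex: "(T ^^ (p - 2)) u = \<one>" using Tp2[OF uG] .
  have d: "(T ^^ d) u = \<one>" unfolding d_def using ex by (rule LeastI)
  have d0: "d \<noteq> 0"
  proof
    assume "d = 0" then show False using d u1 by simp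
  qed
  have v: "(T ^^ (d - 1)) u \<noteq> \<one>" unfolding d_def
    by (rule not_less_Least) (use d0 d_def in auto)
  have after: "(T ^^ e) u = \<one>" if "d \<le> e" for e
  proof -
    have "e = (e - d) + d" using that by simp
    then have "(T ^^ e) u = (T ^^ (e - d)) ((T ^^ d) u)" by (metis funpow_add comp_apply)
    then show ?thesis using d by (simp add: Tn_one)
  qed
  let ?f = "\<lambda>j. (T ^^ j) w [^] (p choose Suc j)"
  have cf: "\<And>j. ?f j \<in> carrier G" using w Tn_closed by auto
  have "(T ^^ (d - 1)) (Sp G h p w) = \<one>" using S Tn_one by simp
  moreover have "(T ^^ (d - 1)) (Sp G h p w) = gs G (\<lambda>j. (T ^^ (d - 1)) (?f j)) p"
    unfolding binom2[OF w(1)]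
    by (rule gs_hom) (auto simp: Tn_closed Tn_mult Tn_one cf)
  moreover have "gs G (\<lambda>j. (T ^^ (d - 1)) (?f j)) p = (T ^^ (d - 1)) u"
  proof -
    let ?g = "\<lambda>j. (T ^^ (d - 1)) (?f j)"
    have cg: "\<And>j. ?g j \<in> carrier G" using cf Tn_closed by auto
    obtain p' where p': "p = Suc p'" using p2 by (cases p) auto
    have "gs G ?g (Suc p') = ?g 0 \<otimes> gs G (\<lambda>i. ?g (Suc i)) p'"
      by (rule gs_shift) (rule cg)
    also have "?g 0 = (T ^^ (d - 1)) u"
      using w by (simp add: u_def Tn_pow)
    also have "gs G (\<lambda>i. ?g (Suc i)) p' = \<one>"
    proof (rule gs_one)
      fix i assume i: "i < p'"
      have e1: "(T ^^ (d - 1)) ((T ^^ Suc i) w) = (T ^^ (d + i)) w"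
      proof -
        have "d + i = (d - 1) + Suc i" using d0 by simp
        then show ?thesis by (metis funpow_add comp_apply)
      qed
      have eq: "?g (Suc i) = (T ^^ (d + i)) w [^] (p choose Suc (Suc i))"
        using Tn_pow[of "(T ^^ Suc i) w" "d - 1"] Tn_closed[OF w(1), of "Suc i"] e1 by (simp del: funpow.simps)
      show "?g (Suc i) = \<one>"
      proof (cases "Suc (Suc i) < p")
        case True
        have "p dvd (p choose Suc (Suc i))" using dvd_choose_prime[OF True _ _ pp] p2 by simp
        moreover have "(T ^^ (d + i)) w \<in> Gp"
          using after[of "d + i"] w by (simp add: Tn_closed u_def flip: Tn_pow)
        ultimately show ?thesis unfolding eq using pow_p_mult_one by blast
      next
        case False
        then have ii: "i = p - 2" using i p' by simp
        have dw: "(T ^^ d) w \<in> Gp" using d w by (simp add: Tn_closed u_def flip: Tn_pow)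
        have "(T ^^ (d + i)) w = (T ^^ (p - 2)) ((T ^^ d) w)"
        proof -
          have "d + i = (p - 2) + d" by (simp add: ii)
          then show ?thesis by (metis funpow_add comp_apply)
        qed
        also have "\<dots> = \<one>" using Tp2[OF dw] .
        finally show ?thesis unfolding eq by simp
      qed
    qed
    finally have c: "gs G ?g (Suc p') = (T ^^ (d - 1)) u \<otimes> \<one>" .
    have "gs G ?g p = gs G ?g (Suc p')" using p' by (rule arg_cong)
    then show ?thesis using c uG Tn_closed[of u "d - 1"] by (simp del: gs.simps)
  qed
  ultimately show False using v by simp
qed

lemma key_iff:
  assumes z: "z \<in> carrier G"
  shows "Sp G h p z = \<one> \<longleftrightarrow> z [^] p = \<one>"
proof
  assume zp: "z [^] p = \<one>"
  then show "Sp G h p z = \<one>" using key_lr z by blast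
next
  assume S: "Sp G h p z = \<one>"
  show "z [^] p = \<one>"
  proof (rule ccontr)
    assume np: "z [^] p \<noteq> \<one>"
    have exN: "z [^] (p ^ N) = \<one>" using pow_order_eq_1[OF z] ordG by simp
    define e where "e = (LEAST e. z [^] (p ^ e) = \<one>)"
    have e: "z [^] (p ^ e) = \<one>" unfolding e_def using exN by (rule LeastI)
    have e0: "e \<noteq> 0"
    proof
      assume "e = 0" then have "z = \<one>" using e z by simp
      then show False using np by simp
    qed
    have e1: "e \<noteq> 1" using e np by auto
    define f where "f = e - 2"
    have ef: "e = Suc (Suc f)" using e0 e1 f_def by simp
    have nf: "z [^] (p ^ Suc f) \<noteq> \<one>" unfolding e_def
      by (rule not_less_Least) (simp add: ef e_def[symmetric])
    define w where "w = z [^] (p ^ f)"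
    have wc: "w \<in> carrier G" using z w_def by simp
    have w1: "w [^] p \<noteq> \<one>" using nf z by (simp add: w_def nat_pow_pow mult.commute)
    have ar: "p ^ f * (p * p) = p ^ e" by (simp add: ef algebra_simps)
    have w2: "w [^] (p * p) = \<one>" using e z by (simp add: w_def nat_pow_pow ar)
    have "Sp G h p w = (Sp G h p z) [^] (p ^ f)" using Sp_pow z w_def by simp
    then have "Sp G h p w = \<one>" using S by simp
    then show False using key_dir[OF wc w1 w2] by simp
  qed
qed

end


locale brace_loc =
  fixes A M :: "'a monoid"
  assumes brace: "left_brace A M"
begin

lemma A_cg: "comm_group A" using brace by (simp add: left_brace_def)
lemma M_g: "group M" using brace by (simp add: left_brace_def)
lemma carr: "carrier M = carrier A" using brace by (simp add: left_brace_def)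
lemma bid: "a \<in> carrier A \<Longrightarrow> b \<in> carrier A \<Longrightarrow> c \<in> carrier A \<Longrightarrow>
    (a \<otimes>\<^bsub>M\<^esub> (b \<otimes>\<^bsub>A\<^esub> c)) \<otimes>\<^bsub>A\<^esub> a = (a \<otimes>\<^bsub>M\<^esub> b) \<otimes>\<^bsub>A\<^esub> (a \<otimes>\<^bsub>M\<^esub> c)"
  using brace by (simp add: left_brace_def)

interpretation Ag: comm_group A by (rule A_cg)
interpretation Mg: group M by (rule M_g)

lemma mclosed: "a \<in> carrier A \<Longrightarrow> b \<in> carrier A \<Longrightarrow> a \<otimes>\<^bsub>M\<^esub> b \<in> carrier A"
  using Mg.m_closed carr by auto

lemma one_eq: "\<one>\<^bsub>M\<^esub> = \<one>\<^bsub>A\<^esub>"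
proof -
  have o: "\<one>\<^bsub>M\<^esub> \<in> carrier A" using carr by auto
  have oM: "\<one>\<^bsub>A\<^esub> \<in> carrier M" using carr by auto
  have e: "\<one>\<^bsub>M\<^esub> \<otimes>\<^bsub>M\<^esub> \<one>\<^bsub>A\<^esub> = \<one>\<^bsub>A\<^esub>" using Mg.l_one[OF oM] .
  show ?thesis using bid[OF o Ag.one_closed Ag.one_closed] o by (simp add: e)
qed

definition lam :: "'a \<Rightarrow> 'a \<Rightarrow> 'a" where
  "lam a b = inv\<^bsub>A\<^esub> a \<otimes>\<^bsub>A\<^esub> (a \<otimes>\<^bsub>M\<^esub> b)"

lemma lam_closed: "a \<in> carrier A \<Longrightarrow> b \<in> carrier A \<Longrightarrow> lam a b \<in> carrier A"
  by (simp add: lam_def mclosed)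

lemma mult_lam: "a \<in> carrier A \<Longrightarrow> b \<in> carrier A \<Longrightarrow> a \<otimes>\<^bsub>M\<^esub> b = a \<otimes>\<^bsub>A\<^esub> lam a b"
  by (simp add: lam_def mclosed Ag.m_assoc[symmetric])

lemma lam_mult: "a \<in> carrier A \<Longrightarrow> b \<in> carrier A \<Longrightarrow> c \<in> carrier A \<Longrightarrow>
   lam a (b \<otimes>\<^bsub>A\<^esub> c) = lam a b \<otimes>\<^bsub>A\<^esub> lam a c"
proof -
  assume abc: "a \<in> carrier A" "b \<in> carrier A" "c \<in> carrier A"
  have e: "a \<otimes>\<^bsub>M\<^esub> (b \<otimes>\<^bsub>A\<^esub> c) = (a \<otimes>\<^bsub>M\<^esub> b) \<otimes>\<^bsub>A\<^esub> (a \<otimes>\<^bsub>M\<^esub> c) \<otimes>\<^bsub>A\<^esub> inv\<^bsub>A\<^esub> a"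
    using bid[OF abc] abc mclosed by (metis Ag.inv_solve_right Ag.m_closed)
  have X: "a \<otimes>\<^bsub>M\<^esub> b \<in> carrier A" "a \<otimes>\<^bsub>M\<^esub> c \<in> carrier A" "inv\<^bsub>A\<^esub> a \<in> carrier A"
    using abc mclosed by auto
  show ?thesis unfolding lam_def e using X
    by (simp add: Ag.m_ac)
qed

lemma lam_one_r: "a \<in> carrier A \<Longrightarrow> lam a \<one>\<^bsub>A\<^esub> = \<one>\<^bsub>A\<^esub>"
proof -
  assume a: "a \<in> carrier A"
  have "a \<otimes>\<^bsub>M\<^esub> \<one>\<^bsub>M\<^esub> = a" using a carr by simp
  then show ?thesis unfolding lam_def one_eq[symmetric] using a by (simp add: one_eq)
qed

lemma lam_inv: "a \<in> carrier A \<Longrightarrow> b \<in> carrier A \<Longrightarrow> lam a (inv\<^bsub>A\<^esub> b) = inv\<^bsub>A\<^esub> (lam a b)"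
proof -
  assume ab: "a \<in> carrier A" "b \<in> carrier A"
  have "lam a (inv\<^bsub>A\<^esub> b) \<otimes>\<^bsub>A\<^esub> lam a b = \<one>\<^bsub>A\<^esub>"
    using lam_mult[OF ab(1) _ ab(2), of "inv\<^bsub>A\<^esub> b"] ab lam_one_r by simp
  then show ?thesis using ab lam_closed by (metis Ag.inv_equality Ag.inv_closed)
qed

lemma lam_comp: "a \<in> carrier A \<Longrightarrow> b \<in> carrier A \<Longrightarrow> c \<in> carrier A \<Longrightarrow>
   lam a (lam b c) = lam (a \<otimes>\<^bsub>M\<^esub> b) c"
proof -
  assume abc: "a \<in> carrier A" "b \<in> carrier A" "c \<in> carrier A"
  have ab: "a \<otimes>\<^bsub>M\<^esub> b \<in> carrier A" using abc mclosed by auto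
  have "lam a (lam b c) = lam a (inv\<^bsub>A\<^esub> b) \<otimes>\<^bsub>A\<^esub> lam a (b \<otimes>\<^bsub>M\<^esub> c)"
    unfolding lam_def[of b c] using abc mclosed by (simp add: lam_mult)
  also have "lam a (inv\<^bsub>A\<^esub> b) = inv\<^bsub>A\<^esub> (lam a b)" using abc lam_inv by simp
  also have "lam a (b \<otimes>\<^bsub>M\<^esub> c) = inv\<^bsub>A\<^esub> a \<otimes>\<^bsub>A\<^esub> ((a \<otimes>\<^bsub>M\<^esub> b) \<otimes>\<^bsub>M\<^esub> c)"
    using abc carr by (simp add: lam_def Mg.m_assoc)
  also have "inv\<^bsub>A\<^esub> (lam a b) = inv\<^bsub>A\<^esub> (a \<otimes>\<^bsub>M\<^esub> b) \<otimes>\<^bsub>A\<^esub> a"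
    using abc mclosed by (simp add: lam_def Ag.inv_mult Ag.m_ac)
  finally have L: "lam a (lam b c) = inv\<^bsub>A\<^esub> (a \<otimes>\<^bsub>M\<^esub> b) \<otimes>\<^bsub>A\<^esub> a \<otimes>\<^bsub>A\<^esub> (inv\<^bsub>A\<^esub> a \<otimes>\<^bsub>A\<^esub> ((a \<otimes>\<^bsub>M\<^esub> b) \<otimes>\<^bsub>M\<^esub> c))" .
  have abc2: "(a \<otimes>\<^bsub>M\<^esub> b) \<otimes>\<^bsub>M\<^esub> c \<in> carrier A" using ab abc mclosed by auto
  have "a \<otimes>\<^bsub>A\<^esub> (inv\<^bsub>A\<^esub> a \<otimes>\<^bsub>A\<^esub> ((a \<otimes>\<^bsub>M\<^esub> b) \<otimes>\<^bsub>M\<^esub> c)) = (a \<otimes>\<^bsub>M\<^esub> b) \<otimes>\<^bsub>M\<^esub> c"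
    using abc abc2 by (simp add: Ag.m_assoc[symmetric])
  then show ?thesis unfolding L lam_def[of "a \<otimes>\<^bsub>M\<^esub> b" c] using abc ab abc2
    by (simp add: Ag.m_assoc)
qed

lemma lam_one_l: "c \<in> carrier A \<Longrightarrow> lam \<one>\<^bsub>M\<^esub> c = c"
proof -
  assume c: "c \<in> carrier A"
  have e: "\<one>\<^bsub>M\<^esub> \<otimes>\<^bsub>M\<^esub> c = c" using Mg.l_one[of c] carr c by simp
  show ?thesis unfolding lam_def e using c by (simp add: one_eq)
qed

lemma lam_pow: "a \<in> carrier A \<Longrightarrow> c \<in> carrier A \<Longrightarrow> (lam a ^^ k) c = lam (a [^]\<^bsub>M\<^esub> k) c"
proof (induct k)
  case 0 then show ?case by (simp add: lam_one_l)
next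
  case (Suc k)
  have ak: "a [^]\<^bsub>M\<^esub> k \<in> carrier A" using Suc.prems carr by (metis Mg.nat_pow_closed)
  have "(lam a ^^ Suc k) c = lam a (lam (a [^]\<^bsub>M\<^esub> k) c)" using Suc by simp
  also have "\<dots> = lam (a \<otimes>\<^bsub>M\<^esub> a [^]\<^bsub>M\<^esub> k) c" using lam_comp Suc.prems ak by simp
  also have "a \<otimes>\<^bsub>M\<^esub> a [^]\<^bsub>M\<^esub> k = a [^]\<^bsub>M\<^esub> Suc k" using Suc.prems carr Mg.nat_pow_Suc2[of a k] by simp
  finally show ?case .
qed

lemma gendo_lam: "a \<in> carrier A \<Longrightarrow> gendo A (lam a)"
  by (unfold_locales) (auto simp: lam_closed lam_mult)

lemma powM_Sp: "a \<in> carrier A \<Longrightarrow> a [^]\<^bsub>M\<^esub> n = Sp A (lam a) n a"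
proof (induct n)
  case 0 then show ?case by (simp add: one_eq)
next
  case (Suc n)
  have an: "a [^]\<^bsub>M\<^esub> n \<in> carrier A" using Suc.prems carr by (metis Mg.nat_pow_closed)
  have "a [^]\<^bsub>M\<^esub> Suc n = a \<otimes>\<^bsub>M\<^esub> a [^]\<^bsub>M\<^esub> n" using Suc.prems carr Mg.nat_pow_Suc2[of a n] by simp
  also have "\<dots> = a \<otimes>\<^bsub>A\<^esub> lam a (a [^]\<^bsub>M\<^esub> n)" using mult_lam Suc.prems an by simp
  finally show ?case using Suc by simp
qed

theorem ord_eq:
  assumes fin: "finite (carrier A)" and pp: "Factorial_Ring.prime p"
    and ordA: "order A = p ^ N"
    and small: "card {x \<in> carrier A. x [^]\<^bsub>A\<^esub> p = \<one>\<^bsub>A\<^esub>} \<le> p ^ (p - 2)"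
    and x: "x \<in> carrier A"
  shows "group.ord M x = group.ord A x"
proof -
  have ordM: "order M = p ^ N" using ordA carr by (simp add: order_def)
  have kl: "keyloc A (lam y) p N" if y: "y \<in> carrier A" for y
  proof -
    interpret gendo A "lam y" by (rule gendo_lam[OF y])
    show ?thesis
    proof (unfold_locales)
      show "finite (carrier A)" by (rule fin)
      show "Factorial_Ring.prime p" by (rule pp)
      show "order A = p ^ N" by (rule ordA)
      show "card {x \<in> carrier A. x [^]\<^bsub>A\<^esub> p = \<one>\<^bsub>A\<^esub>} \<le> p ^ (p - 2)" by (rule small)
      fix z assume z: "z \<in> carrier A"
      have "y [^]\<^bsub>M\<^esub> (p ^ N) = \<one>\<^bsub>M\<^esub>" using Mg.pow_order_eq_1[of y] y carr ordM by simp
      then show "(lam y ^^ (p ^ N)) z = z" using lam_pow[OF y z] lam_one_l[OF z] by simp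
    qed
  qed
  have step: "(y [^]\<^bsub>M\<^esub> p) [^]\<^bsub>A\<^esub> (p ^ f) = \<one>\<^bsub>A\<^esub> \<longleftrightarrow> y [^]\<^bsub>A\<^esub> (p ^ Suc f) = \<one>\<^bsub>A\<^esub>"
    if y: "y \<in> carrier A" for y f
  proof -
    interpret keyloc A "lam y" p N by (rule kl[OF y])
    have "(y [^]\<^bsub>M\<^esub> p) [^]\<^bsub>A\<^esub> (p ^ f) = Sp A (lam y) p (y [^]\<^bsub>A\<^esub> (p ^ f))"
      using powM_Sp[OF y] Sp_pow[OF y] by simp
    also have "\<dots> = \<one>\<^bsub>A\<^esub> \<longleftrightarrow> (y [^]\<^bsub>A\<^esub> (p ^ f)) [^]\<^bsub>A\<^esub> p = \<one>\<^bsub>A\<^esub>"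
      using key_iff y by simp
    also have "(y [^]\<^bsub>A\<^esub> (p ^ f)) [^]\<^bsub>A\<^esub> p = y [^]\<^bsub>A\<^esub> (p ^ Suc f)"
      using y by (simp add: Ag.nat_pow_pow mult.commute)
    finally show ?thesis .
  qed
  have ind: "\<forall>f y. y \<in> carrier A \<longrightarrow> ((y [^]\<^bsub>M\<^esub> (p ^ k)) [^]\<^bsub>A\<^esub> (p ^ f) = \<one>\<^bsub>A\<^esub> \<longleftrightarrow> y [^]\<^bsub>A\<^esub> (p ^ (f + k)) = \<one>\<^bsub>A\<^esub>)" for k
  proof (induct k)
    case 0 then show ?case using carr by simp
  next
    case (Suc k)
    show ?case
    proof (intro allI impI)
      fix f y assume y: "y \<in> carrier A"
      have yk: "y [^]\<^bsub>M\<^esub> (p ^ k) \<in> carrier A" using y carr by (metis Mg.nat_pow_closed)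
      have "y [^]\<^bsub>M\<^esub> (p ^ Suc k) = (y [^]\<^bsub>M\<^esub> (p ^ k)) [^]\<^bsub>M\<^esub> p"
        using y carr by (simp add: Mg.nat_pow_pow mult.commute)
      then have "(y [^]\<^bsub>M\<^esub> (p ^ Suc k)) [^]\<^bsub>A\<^esub> (p ^ f) = \<one>\<^bsub>A\<^esub> \<longleftrightarrow>
           (y [^]\<^bsub>M\<^esub> (p ^ k)) [^]\<^bsub>A\<^esub> (p ^ Suc f) = \<one>\<^bsub>A\<^esub>"
        using step[OF yk, of f] by simp
      also have "\<dots> \<longleftrightarrow> y [^]\<^bsub>A\<^esub> (p ^ (Suc f + k)) = \<one>\<^bsub>A\<^esub>" using Suc y by blast
      finally show "(y [^]\<^bsub>M\<^esub> (p ^ Suc k)) [^]\<^bsub>A\<^esub> (p ^ f) = \<one>\<^bsub>A\<^esub> \<longleftrightarrow> y [^]\<^bsub>A\<^esub> (p ^ (f + Suc k)) = \<one>\<^bsub>A\<^esub>"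
        by simp
    qed
  qed
  have eqv: "x [^]\<^bsub>M\<^esub> (p ^ k) = \<one>\<^bsub>M\<^esub> \<longleftrightarrow> x [^]\<^bsub>A\<^esub> (p ^ k) = \<one>\<^bsub>A\<^esub>" for k
  proof -
    have xk: "x [^]\<^bsub>M\<^esub> (p ^ k) \<in> carrier A" using x carr by (metis Mg.nat_pow_closed)
    have e: "(x [^]\<^bsub>M\<^esub> (p ^ k)) [^]\<^bsub>A\<^esub> (p ^ 0) = x [^]\<^bsub>M\<^esub> (p ^ k)"
      using Ag.l_one[OF xk] by simp
    have i0: "(x [^]\<^bsub>M\<^esub> (p ^ k)) [^]\<^bsub>A\<^esub> (p ^ 0) = \<one>\<^bsub>A\<^esub> \<longleftrightarrow> x [^]\<^bsub>A\<^esub> (p ^ (0 + k)) = \<one>\<^bsub>A\<^esub>"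
      using ind[of k] x by blast
    show ?thesis using i0 unfolding e one_eq by simp
  qed
  have xM: "x \<in> carrier M" using x carr by simp
  have "group.ord M x dvd p ^ N" using Mg.ord_dvd_group_order[OF xM] ordM by simp
  then have "\<exists>i\<le>N. group.ord M x = p ^ i" by (simp only: divides_primepow_nat[OF pp])
  then obtain i where i: "group.ord M x = p ^ i" by (elim exE conjE)
  have "group.ord A x dvd p ^ N" using Ag.ord_dvd_group_order[OF x] ordA by simp
  then have "\<exists>i\<le>N. group.ord A x = p ^ i" by (simp only: divides_primepow_nat[OF pp])
  then obtain j where j: "group.ord A x = p ^ j" by (elim exE conjE)
  have "x [^]\<^bsub>M\<^esub> (p ^ i) = \<one>\<^bsub>M\<^esub>" using Mg.pow_eq_id[OF xM] i by simp
  then have "x [^]\<^bsub>A\<^esub> (p ^ i) = \<one>\<^bsub>A\<^esub>" using eqv by simp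
  then have d1: "group.ord A x dvd group.ord M x" using Ag.pow_eq_id[OF x] i by simp
  have "x [^]\<^bsub>A\<^esub> (p ^ j) = \<one>\<^bsub>A\<^esub>" using Ag.pow_eq_id[OF x] j by simp
  then have "x [^]\<^bsub>M\<^esub> (p ^ j) = \<one>\<^bsub>M\<^esub>" using eqv by simp
  then have d2: "group.ord M x dvd group.ord A x" using Mg.pow_eq_id[OF xM] j by simp
  show ?thesis by (rule dvd_antisym[OF d2 d1])
qed

end



definition tor :: "('a, 'b) monoid_scheme \<Rightarrow> nat \<Rightarrow> 'a set" where
  "tor G n = {x \<in> carrier G. x [^]\<^bsub>G\<^esub> n = \<one>\<^bsub>G\<^esub>}"

lemma iso_tor_card:
  assumes h: "h \<in> iso G H" and G: "group G" and H: "group H"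
  shows "card (tor G n) = card (tor H n)"
proof -
  have hom: "h \<in> hom G H" and bij: "bij_betw h (carrier G) (carrier H)"
    using h by (auto simp: iso_def)
  interpret gh: group_hom G H h using G H hom by (simp add: group_hom_def group_hom_axioms_def)
  have inj: "inj_on h (carrier G)" using bij by (simp add: bij_betw_def)
  have "h ` tor G n = tor H n"
  proof
    show "h ` tor G n \<subseteq> tor H n"
      by (auto simp: tor_def gh.hom_nat_pow[symmetric])
    show "tor H n \<subseteq> h ` tor G n"
    proof
      fix y assume y: "y \<in> tor H n"
      then obtain x where x: "x \<in> carrier G" "y = h x" using bij
        by (auto simp: tor_def bij_betw_def)
      have "h (x [^]\<^bsub>G\<^esub> n) = h \<one>\<^bsub>G\<^esub>" using y x by (simp add: tor_def gh.hom_nat_pow)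
      then have "x [^]\<^bsub>G\<^esub> n = \<one>\<^bsub>G\<^esub>" using inj x
        by (meson group.is_monoid G inj_onD monoid.nat_pow_closed monoid.one_closed)
      then show "y \<in> h ` tor G n" using x by (auto simp: tor_def)
    qed
  qed
  moreover have "inj_on h (tor G n)" using inj by (rule inj_on_subset) (auto simp: tor_def)
  ultimately show ?thesis by (metis card_image)
qed

lemma is_iso_tor_card:
  assumes "G \<cong> H" "group G" "group H"
  shows "card (tor G n) = card (tor H n)"
  using assms iso_tor_card unfolding is_iso_def by blast

lemma pow_DirProd:
  "(x, y) [^]\<^bsub>G \<times>\<times> H\<^esub> (n::nat) = (x [^]\<^bsub>G\<^esub> n, y [^]\<^bsub>H\<^esub> n)"
  by (induct n) auto

lemma tor_DirProd: "tor (G \<times>\<times> H) n = tor G n \<times> tor H n"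
  by (auto simp: tor_def pow_DirProd)

lemma pow_product_group:
  assumes "f \<in> carrier (product_group I F)"
  shows "f [^]\<^bsub>product_group I F\<^esub> (n::nat) = (\<lambda>i\<in>I. f i [^]\<^bsub>F i\<^esub> n)"
  using assms by (induct n) (auto simp: fun_eq_iff PiE_iff)

lemma tor_product_group:
  "tor (product_group I F) n = (\<Pi>\<^sub>E i\<in>I. tor (F i) n)"
proof -
  have "f \<in> tor (product_group I F) n \<longleftrightarrow> f \<in> (\<Pi>\<^sub>E i\<in>I. tor (F i) n)" for f
  proof (cases "f \<in> carrier (product_group I F)")
    case True
    then show ?thesis using pow_product_group[OF True, of n]
      by (auto simp: tor_def PiE_iff fun_eq_iff restrict_def split: if_splits)
  next
    case False
    then show ?thesis by (auto simp: tor_def PiE_iff)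
  qed
  then show ?thesis by blast
qed

lemma card_tor_Zmod:
  fixes p :: nat assumes p: "p > 1"
  shows "card (tor (integer_mod_group (p ^ a)) (p ^ k)) = p ^ (min k a)"
proof -
  define b where "b = min k a"
  define d :: int where "d = int p ^ (a - b)"
  have d0: "d > 0" using p by (simp add: d_def)
  have pa: "int (p ^ a) = d * int p ^ b" using p by (simp add: d_def b_def flip: power_add)
  have T: "tor (integer_mod_group (p ^ a)) (p ^ k) = {x \<in> {0..<int (p ^ a)}. int (p ^ a) dvd int (p ^ k) * x}"
    using p by (auto simp: tor_def carrier_integer_mod_group pow_integer_mod_group dvd_eq_mod_eq_0)
  have key: "int (p ^ a) dvd int (p ^ k) * x \<longleftrightarrow> d dvd x" for x :: int
  proof (cases "a \<le> k")
    case True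
    then have "d = 1" by (simp add: d_def b_def)
    moreover have "int (p ^ a) dvd int (p ^ k)" using True by (simp add: le_imp_power_dvd)
    ultimately show ?thesis by simp
  next
    case False
    then have bk: "b = k" by (simp add: b_def)
    have "int (p ^ a) = int p ^ k * d" using pa bk by simp
    then show ?thesis using p by (simp add: mult_dvd_mono)
  qed
  have "tor (integer_mod_group (p ^ a)) (p ^ k) = (\<lambda>t. d * t) ` {0..<int p ^ b}"
  proof
    show "tor (integer_mod_group (p ^ a)) (p ^ k) \<subseteq> (\<lambda>t. d * t) ` {0..<int p ^ b}"
    proof
      fix x assume "x \<in> tor (integer_mod_group (p ^ a)) (p ^ k)"
      then have x: "0 \<le> x" "x < int (p ^ a)" "d dvd x" using T key by auto
      then obtain t where t: "x = d * t" by (auto elim: dvdE)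
      have "0 \<le> t" using x t d0 by (simp add: zero_le_mult_iff)
      moreover have "t < int p ^ b"
      proof (rule ccontr)
        assume "\<not> t < int p ^ b"
        then have "d * int p ^ b \<le> d * t" using d0 by simp
        then show False using x t pa by simp
      qed
      ultimately show "x \<in> (\<lambda>t. d * t) ` {0..<int p ^ b}" using t by auto
    qed
    show "(\<lambda>t. d * t) ` {0..<int p ^ b} \<subseteq> tor (integer_mod_group (p ^ a)) (p ^ k)"
    proof
      fix x assume "x \<in> (\<lambda>t. d * t) ` {0..<int p ^ b}"
      then obtain t where tt: "t \<in> {0..<int p ^ b}" and tx: "x = d * t" by (rule imageE)
      have t: "x = d * t" "0 \<le> t" "t < int p ^ b" using tt tx by auto
      have "d * t < d * int p ^ b" using t(3) d0 by simp
      then have "x < int (p ^ a)" using t(1) pa by simp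
      moreover have "0 \<le> x" using t d0 by simp
      ultimately show "x \<in> tor (integer_mod_group (p ^ a)) (p ^ k)" using T key t by auto
    qed
  qed
  moreover have "inj_on (\<lambda>t. d * t) {0..<int p ^ b}" using d0 by (auto simp: inj_on_def)
  ultimately have "card (tor (integer_mod_group (p ^ a)) (p ^ k)) = card {0..<int p ^ b}"
    by (simp add: card_image)
  also have "\<dots> = p ^ b" by (simp flip: of_nat_power)
  finally show ?thesis by (simp add: b_def)
qed

lemma card_Zmod: "n > 0 \<Longrightarrow> card (carrier (integer_mod_group n)) = n"
  by (simp add: carrier_integer_mod_group)

lemma card_tor_P:
  fixes p m :: nat assumes p: "p > 1"
  shows "card (tor (product_group {..<m} (\<lambda>i. integer_mod_group (p ^ \<alpha> i))) (p ^ k))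
       = p ^ (\<Sum>i<m. min k (\<alpha> i))"
proof -
  have "card (tor (product_group {..<m} (\<lambda>i. integer_mod_group (p ^ \<alpha> i))) (p ^ k))
     = (\<Prod>i<m. card (tor (integer_mod_group (p ^ \<alpha> i)) (p ^ k)))"
    unfolding tor_product_group by (rule card_PiE) simp
  also have "\<dots> = (\<Prod>i<m. p ^ min k (\<alpha> i))" using card_tor_Zmod[OF p] by simp
  finally show ?thesis by (simp add: power_sum)
qed

lemma card_P:
  fixes p m :: nat assumes p: "p > 1"
  shows "card (carrier (product_group {..<m} (\<lambda>i. integer_mod_group (p ^ \<alpha> i))))
       = p ^ (\<Sum>i<m. \<alpha> i)"
proof -
  have "card (carrier (product_group {..<m} (\<lambda>i. integer_mod_group (p ^ \<alpha> i))))
     = (\<Prod>i<m. card (carrier (integer_mod_group (p ^ \<alpha> i))))"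
    unfolding carrier_product_group by (rule card_PiE) simp
  also have "\<dots> = (\<Prod>i<m. p ^ \<alpha> i)" using p card_Zmod by simp
  finally show ?thesis by (simp add: power_sum)
qed


context group begin

lemma pow_mod_q: fixes q :: nat shows "g \<in> carrier G \<Longrightarrow> g [^] q = \<one> \<Longrightarrow> g [^] (n mod q) = g [^] (n::nat)"
proof -
  assume g: "g \<in> carrier G" and q: "g [^] q = \<one>"
  have e1: "g [^] (q * (n div q) + n mod q) = g [^] (q * (n div q)) \<otimes> g [^] (n mod q)"
    using g by (rule nat_pow_mult[symmetric])
  have e2: "g [^] (q * (n div q)) = (g [^] q) [^] (n div q)" using g by (rule nat_pow_pow[symmetric])
  have "q * (n div q) + n mod q = n" by simp
  then show ?thesis using e1 e2 q g by simp
qed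

lemma cyc_subgroup:
  fixes q :: nat
  assumes g: "g \<in> carrier G" and q: "g [^] q = \<one>" "q > 0"
  shows "subgroup (range (\<lambda>n::nat. g [^] n)) G"
proof (rule subgroupI)
  show "range (\<lambda>n::nat. g [^] n) \<subseteq> carrier G" using g by auto
  show "range (\<lambda>n::nat. g [^] n) \<noteq> {}" by auto
  show "inv a \<in> range (\<lambda>n::nat. g [^] n)" if ain: "a \<in> range (\<lambda>n::nat. g [^] n)" for a
  proof -
    obtain n :: nat where a: "a = g [^] n" using ain by auto
    have "g [^] (n * (q - 1)) \<otimes> a = g [^] (n * q)"
      using g q by (simp add: a nat_pow_mult algebra_simps)
    also have "\<dots> = \<one>" using g q by (metis nat_pow_pow mult.commute nat_pow_one)
    finally have "inv a = g [^] (n * (q - 1))" using g a by (metis inv_equality nat_pow_closed)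
    then show ?thesis by auto
  qed
  show "a \<otimes> b \<in> range (\<lambda>n::nat. g [^] n)" if "a \<in> range (\<lambda>n::nat. g [^] n)" "b \<in> range (\<lambda>n::nat. g [^] n)" for a b
    using that g by (auto simp: nat_pow_mult)
qed

lemma cyclic_iso:
  assumes g: "g \<in> carrier G" and og: "ord g = q" and q: "q > 0"
  shows "(\<lambda>i. g [^] nat i) \<in> iso (integer_mod_group q) (subgroup_generated G (range (\<lambda>n::nat. g [^] n)))"
proof (rule isoI)
  have gq: "g [^] q = \<one>" using pow_ord_eq_1[OF g] og by simp
  interpret C: subgroup "range (\<lambda>n::nat. g [^] n)" G using cyc_subgroup[OF g gq q] .
  have carC: "carrier (subgroup_generated G (range (\<lambda>n::nat. g [^] n))) = range (\<lambda>n::nat. g [^] n)"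
    by simp
  show "(\<lambda>i. g [^] nat i) \<in> hom (integer_mod_group q) (subgroup_generated G (range (\<lambda>n::nat. g [^] n)))"
  proof (rule homI)
    show "g [^] nat x \<in> carrier (subgroup_generated G (range (\<lambda>n::nat. g [^] n)))" for x
      unfolding carC by auto
    fix x y assume xy: "x \<in> carrier (integer_mod_group q)" "y \<in> carrier (integer_mod_group q)"
    then have x: "0 \<le> x" and y: "0 \<le> y" using q by (auto simp: carrier_integer_mod_group)
    have "nat ((x + y) mod int q) = (nat x + nat y) mod q"
      using x y by (simp add: nat_mod_distrib nat_add_distrib)
    then have "g [^] nat (x \<otimes>\<^bsub>integer_mod_group q\<^esub> y) = g [^] (nat x + nat y)"
      using pow_mod_q[OF g gq] by simp
    also have "\<dots> = g [^] nat x \<otimes>\<^bsub>subgroup_generated G (range (\<lambda>n::nat. g [^] n))\<^esub> g [^] nat y"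
      using g by (simp add: nat_pow_mult)
    finally show "g [^] nat (x \<otimes>\<^bsub>integer_mod_group q\<^esub> y) = g [^] nat x \<otimes>\<^bsub>subgroup_generated G (range (\<lambda>n::nat. g [^] n))\<^esub> g [^] nat y" .
  qed
  show "bij_betw (\<lambda>i. g [^] nat i) (carrier (integer_mod_group q)) (carrier (subgroup_generated G (range (\<lambda>n::nat. g [^] n))))"
    unfolding carC bij_betw_def
  proof
    have inj: "inj_on (\<lambda>x. g [^] x) {0 .. ord g - 1}" by (rule ord_inj[OF g])
    show "inj_on (\<lambda>i. g [^] nat i) (carrier (integer_mod_group q))"
    proof (rule inj_onI)
      fix x y assume x: "x \<in> carrier (integer_mod_group q)" and y: "y \<in> carrier (integer_mod_group q)"
        and e: "g [^] nat x = g [^] nat y"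
      have "nat x \<in> {0 .. ord g - 1}" "nat y \<in> {0 .. ord g - 1}" using x y q og
        by (auto simp: carrier_integer_mod_group)
      then have "nat x = nat y" using inj e by (auto dest: inj_onD)
      then show "x = y" using x y q by (auto simp: carrier_integer_mod_group)
    qed
    show "(\<lambda>i. g [^] nat i) ` carrier (integer_mod_group q) = range (\<lambda>n::nat. g [^] n)"
    proof
      show "(\<lambda>i. g [^] nat i) ` carrier (integer_mod_group q) \<subseteq> range (\<lambda>n::nat. g [^] n)" by auto
      show "range (\<lambda>n::nat. g [^] n) \<subseteq> (\<lambda>i. g [^] nat i) ` carrier (integer_mod_group q)"
      proof
        fix z assume "z \<in> range (\<lambda>n::nat. g [^] n)"
        then obtain n :: nat where n: "z = g [^] n" by auto
        have "z = g [^] nat (int (n mod q))" using n pow_mod_q[OF g gq] by simp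
        moreover have "int (n mod q) \<in> carrier (integer_mod_group q)"
          using q by (auto simp: carrier_integer_mod_group)
        ultimately show "z \<in> (\<lambda>i. g [^] nat i) ` carrier (integer_mod_group q)" by blast
      qed
    qed
  qed
qed

end

lemma iso_extend_product:
  assumes grp: "\<And>i. group (F i)"
  shows "(\<lambda>(z, f). f(m := z)) \<in> iso (F m \<times>\<times> product_group {..<m} F) (product_group {..<Suc m} F)"
proof (rule isoI)
  have car: "f(m := z) \<in> carrier (product_group {..<Suc m} F)"
    if "z \<in> carrier (F m)" "f \<in> carrier (product_group {..<m} F)" for z f
    using that by (auto simp: PiE_iff extensional_def less_Suc_eq)
  have car2: "(g m, g(m := undefined)) \<in> carrier (F m \<times>\<times> product_group {..<m} F)"
    if "g \<in> carrier (product_group {..<Suc m} F)" for g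
    using that by (auto simp: PiE_iff extensional_def less_Suc_eq)
  show "(\<lambda>(z, f). f(m := z)) \<in> hom (F m \<times>\<times> product_group {..<m} F) (product_group {..<Suc m} F)"
  proof (rule homI)
    fix x assume "x \<in> carrier (F m \<times>\<times> product_group {..<m} F)"
    then show "(case x of (z, f) \<Rightarrow> f(m := z)) \<in> carrier (product_group {..<Suc m} F)"
      using car by (cases x) auto
  next
    fix x y assume x: "x \<in> carrier (F m \<times>\<times> product_group {..<m} F)"
      and y: "y \<in> carrier (F m \<times>\<times> product_group {..<m} F)"
    obtain z f where zf: "x = (z, f)" by (cases x)
    obtain z' f' where zf': "y = (z', f')" by (cases y)
    have "(\<lambda>i\<in>{..<m}. f i \<otimes>\<^bsub>F i\<^esub> f' i)(m := z \<otimes>\<^bsub>F m\<^esub> z') =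
          (\<lambda>i\<in>{..<Suc m}. (f(m := z)) i \<otimes>\<^bsub>F i\<^esub> (f'(m := z')) i)"
      by (rule ext) (simp add: less_Suc_eq)
    then show "(case x \<otimes>\<^bsub>F m \<times>\<times> product_group {..<m} F\<^esub> y of (z, f) \<Rightarrow> f(m := z)) =
         (case x of (z, f) \<Rightarrow> f(m := z)) \<otimes>\<^bsub>product_group {..<Suc m} F\<^esub> (case y of (z, f) \<Rightarrow> f(m := z))"
      unfolding zf zf' by simp
  qed
  show "bij_betw (\<lambda>(z, f). f(m := z)) (carrier (F m \<times>\<times> product_group {..<m} F)) (carrier (product_group {..<Suc m} F))"
  proof (rule bij_betw_byWitness[where f' = "\<lambda>g. (g m, g(m := undefined))"])
    show "\<forall>a\<in>carrier (F m \<times>\<times> product_group {..<m} F). (\<lambda>g. (g m, g(m := undefined))) (case a of (z, f) \<Rightarrow> f(m := z)) = a"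
    proof
      fix a assume a: "a \<in> carrier (F m \<times>\<times> product_group {..<m} F)"
      obtain z f where zf: "a = (z, f)" by (cases a)
      have "f m = undefined" using a zf by (auto simp: PiE_iff extensional_def)
      then have "(f(m := z))(m := undefined) = f" by auto
      then show "(\<lambda>g. (g m, g(m := undefined))) (case a of (z, f) \<Rightarrow> f(m := z)) = a" using zf by simp
    qed
    show "\<forall>a'\<in>carrier (product_group {..<Suc m} F). (case (\<lambda>g. (g m, g(m := undefined))) a' of (z, f) \<Rightarrow> f(m := z)) = a'"
      by simp
    show "(\<lambda>(z, f). f(m := z)) ` carrier (F m \<times>\<times> product_group {..<m} F) \<subseteq> carrier (product_group {..<Suc m} F)"
      using car by auto
    show "(\<lambda>g. (g m, g(m := undefined))) ` carrier (product_group {..<Suc m} F) \<subseteq> carrier (F m \<times>\<times> product_group {..<m} F)"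
      using car2 by auto
  qed
qed

lemma (in group) subgroup_nat_pow_closed: "subgroup H G \<Longrightarrow> x \<in> H \<Longrightarrow> x [^] (n::nat) \<in> H"
  by (induct n) (auto simp: subgroup.one_closed subgroup.m_closed)

context comm_group begin

lemma mem_set_mult: "z \<in> U1 <#> U2 \<longleftrightarrow> (\<exists>x\<in>U1. \<exists>y\<in>U2. z = x \<otimes> y)"
  by (auto simp: set_mult_def)

lemma complement:
  fixes p a :: nat and g
  assumes fin: "finite (carrier G)" and pp: "Factorial_Ring.prime p"
    and g: "g \<in> carrier G" and og: "ord g = p ^ a" and a1: "1 \<le> a"
    and expo: "\<And>x. x \<in> carrier G \<Longrightarrow> x [^] (p ^ a) = \<one>"
  shows "\<exists>K. subgroup K G \<and> range (\<lambda>n::nat. g [^] n) \<inter> K \<subseteq> {\<one>}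
            \<and> range (\<lambda>n::nat. g [^] n) <#> K = carrier G"
proof -
  define C where "C = range (\<lambda>n::nat. g [^] n)"
  have p2: "2 \<le> p" using pp prime_ge_2_nat by blast
  have gq: "g [^] (p ^ a) = \<one>" using og g by (metis pow_ord_eq_1)
  have subC: "subgroup C G" unfolding C_def using cyc_subgroup[OF g gq] p2 by simp
  have Csub: "C \<subseteq> carrier G" using subC subgroup.subset by blast
  define S where "S = {K. subgroup K G \<and> C \<inter> K \<subseteq> {\<one>}}"
  have finS: "finite S"
  proof -
    have "S \<subseteq> Pow (carrier G)" by (auto simp: S_def dest: subgroup.subset)
    then show ?thesis using fin by (meson finite_Pow_iff finite_subset)
  qed
  have "{\<one>} \<in> S" by (auto simp: S_def triv_subgroup)
  then obtain K where KS: "K \<in> S" and Kmax: "\<forall>K'\<in>S. K \<subseteq> K' \<longrightarrow> K = K'"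
    using finite_has_maximal[OF finS] by blast
  have subK: "subgroup K G" and CK: "C \<inter> K \<subseteq> {\<one>}" using KS by (auto simp: S_def)
  have Ksub: "K \<subseteq> carrier G" using subK subgroup.subset by blast
  define H where "H = C <#> K"
  have memH: "z \<in> H \<longleftrightarrow> (\<exists>c\<in>C. \<exists>k\<in>K. z = c \<otimes> k)" for z
    by (simp add: H_def mem_set_mult)
  have Hsub: "H \<subseteq> carrier G" using Csub Ksub by (auto simp: memH intro!: m_closed)
  have H1: "\<one> \<in> H"
  proof -
    have "\<one> \<otimes> \<one> \<in> H" unfolding memH using subgroup.one_closed[OF subC] subgroup.one_closed[OF subK] by blast
    then show ?thesis by simp
  qed
  have Hmult: "x \<otimes> y \<in> H" if xyH: "x \<in> H" "y \<in> H" for x y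
  proof -
    obtain c k where ck: "c \<in> C" "k \<in> K" "x = c \<otimes> k" using xyH(1) memH by blast
    obtain c' k' where ck': "c' \<in> C" "k' \<in> K" "y = c' \<otimes> k'" using xyH(2) memH by blast
    have cs: "c \<in> carrier G" "k \<in> carrier G" "c' \<in> carrier G" "k' \<in> carrier G" using ck ck' Csub Ksub by auto
    have "x \<otimes> y = (c \<otimes> c') \<otimes> (k \<otimes> k')" using ck ck' cs by (simp add: m_ac)
    then show ?thesis using ck ck' subgroup.m_closed[OF subC] subgroup.m_closed[OF subK] memH by blast
  qed
  have CH: "c \<in> H" if "c \<in> C" for c
    using that subgroup.one_closed[OF subK] Csub memH by (metis r_one subsetD)
  have KH: "k \<in> H" if "k \<in> K" for k
    using that subgroup.one_closed[OF subC] Ksub memH by (metis l_one subsetD)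
  have Hpow: "x [^] (n::nat) \<in> H" if "x \<in> H" for x n
    using that by (induct n) (auto simp: H1 Hmult)
  have "H = carrier G"
  proof (rule ccontr)
    assume "H \<noteq> carrier G"
    then obtain x where x: "x \<in> carrier G" "x \<notin> H" using Hsub by blast
    define j where "j = (LEAST j. x [^] (p ^ j) \<in> H)"
    have xa: "x [^] (p ^ a) \<in> H" using expo[OF x(1)] H1 by simp
    have j: "x [^] (p ^ j) \<in> H" unfolding j_def using xa by (rule LeastI)
    have j0: "j \<noteq> 0"
    proof
      assume "j = 0" then show False using j x by simp
    qed
    define x' where "x' = x [^] (p ^ (j - 1))"
    have x'c: "x' \<in> carrier G" using x by (simp add: x'_def)
    have x'H: "x' \<notin> H" unfolding x'_def j_def
      by (rule not_less_Least) (use j0 j_def in auto)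
    have "x' [^] p = x [^] (p ^ (j - 1) * p)" using x by (simp add: x'_def nat_pow_pow)
    also have "p ^ (j - 1) * p = p ^ j" using j0 by (simp add: power_Suc2[symmetric])
    finally have x'p: "x' [^] p \<in> H" using j by simp
    then obtain c k where ck: "c \<in> C" "k \<in> K" "x' [^] p = c \<otimes> k" using memH by blast
    obtain s :: nat where s: "c = g [^] s" using ck(1) by (auto simp: C_def)
    have kc: "k \<in> carrier G" using ck Ksub by auto
    have "(x' [^] p) [^] (p ^ (a - 1)) = x' [^] (p ^ a)"
      using x'c a1 by (simp add: nat_pow_pow power_Suc[symmetric])
    also have "\<dots> = \<one>" using expo[OF x'c] .
    finally have "(g [^] s \<otimes> k) [^] (p ^ (a - 1)) = \<one>" using ck s by simp
    then have e: "g [^] (s * p ^ (a - 1)) \<otimes> k [^] (p ^ (a - 1)) = \<one>"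
      using g kc by (simp add: nat_pow_distrib nat_pow_pow)
    have "g [^] (s * p ^ (a - 1)) = inv (k [^] (p ^ (a - 1)))"
      using e g kc by (metis inv_equality nat_pow_closed inv_unique')
    moreover have "inv (k [^] (p ^ (a - 1))) \<in> K"
      using ck(2) subK by (simp add: subgroup.m_inv_closed subgroup_nat_pow_closed)
    moreover have "g [^] (s * p ^ (a - 1)) \<in> C" by (auto simp: C_def)
    ultimately have "g [^] (s * p ^ (a - 1)) = \<one>" using CK by auto
    then have "p ^ a dvd s * p ^ (a - 1)" using pow_eq_id[OF g] og by simp
    moreover have "p ^ a = p * p ^ (a - 1)" using a1 by (simp add: power_Suc[symmetric])
    ultimately have "p dvd s" using p2 by simp
    then obtain t where t: "s = p * t" by (auto elim: dvdE)
    define y where "y = x' \<otimes> inv (g [^] t)"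
    have yc: "y \<in> carrier G" using x'c g by (simp add: y_def)
    have yH: "y \<notin> H"
    proof
      assume "y \<in> H"
      moreover have "g [^] t \<in> H" using CH by (auto simp: C_def)
      ultimately have "y \<otimes> g [^] t \<in> H" by (rule Hmult)
      moreover have "y \<otimes> g [^] t = x'" using x'c g by (simp add: y_def m_assoc)
      ultimately show False using x'H by simp
    qed
    have yp: "y [^] p = k"
    proof -
      have "y [^] p = x' [^] p \<otimes> inv (g [^] t) [^] p" using x'c g by (simp add: y_def nat_pow_distrib)
      also have "inv (g [^] t) [^] p = inv (g [^] s)" using g by (simp add: nat_pow_inv nat_pow_pow t mult.commute)
      finally show ?thesis using ck s g kc by (simp add: m_ac)
    qed
    define K' where "K' = (\<lambda>(k, i::nat). k \<otimes> y [^] i) ` (K \<times> UNIV)"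
    have memK': "z \<in> K' \<longleftrightarrow> (\<exists>k\<in>K. \<exists>i::nat. z = k \<otimes> y [^] i)" for z
      by (auto simp: K'_def)
    have ypK: "(y [^] p) [^] (n::nat) \<in> K" for n using yp ck(2) subK by (simp add: subgroup_nat_pow_closed)
    have subK': "subgroup K' G"
    proof (rule subgroupI)
      show "K' \<subseteq> carrier G" using Ksub yc by (auto simp: memK' intro!: m_closed)
      show "K' \<noteq> {}" using subgroup.one_closed[OF subK] by (auto simp: K'_def)
      show "inv z \<in> K'" if zK: "z \<in> K'" for z
      proof -
        obtain k0 and i :: nat where z: "k0 \<in> K" "z = k0 \<otimes> y [^] i" using zK memK' by blast
        have k0c: "k0 \<in> carrier G" using z Ksub by auto
        have e1: "y [^] (i * (p - 1)) \<otimes> y [^] i = y [^] (i * p)"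
          using yc p2 by (simp add: nat_pow_mult algebra_simps)
        have e2: "inv (y [^] (i * p)) = inv (y [^] (i * (p - 1))) \<otimes> inv (y [^] i)"
          unfolding e1[symmetric] using yc by (simp add: inv_mult)
        have "inv (y [^] i) = y [^] (i * (p - 1)) \<otimes> inv (y [^] (i * p))"
          unfolding e2 using yc by (simp add: m_assoc[symmetric])
        then have "inv z = (inv k0 \<otimes> inv ((y [^] p) [^] i)) \<otimes> y [^] (i * (p - 1))"
          using z k0c yc by (simp add: inv_mult nat_pow_pow mult.commute m_ac)
        moreover have "inv k0 \<otimes> inv ((y [^] p) [^] i) \<in> K"
          using z ypK subK by (simp add: subgroup.m_closed subgroup.m_inv_closed)
        ultimately show ?thesis using memK' by blast
      qed
      show "z1 \<otimes> z2 \<in> K'" if zK: "z1 \<in> K'" "z2 \<in> K'" for z1 z2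
      proof -
        obtain k1 and i1 :: nat where z1: "k1 \<in> K" "z1 = k1 \<otimes> y [^] i1" using zK(1) memK' by blast
        obtain k2 and i2 :: nat where z2: "k2 \<in> K" "z2 = k2 \<otimes> y [^] i2" using zK(2) memK' by blast
        have kc12: "k1 \<in> carrier G" "k2 \<in> carrier G" using z1 z2 Ksub by auto
        have "z1 \<otimes> z2 = (k1 \<otimes> k2) \<otimes> (y [^] i1 \<otimes> y [^] i2)"
          using z1 z2 kc12 yc by (simp add: m_ac)
        then have "z1 \<otimes> z2 = (k1 \<otimes> k2) \<otimes> y [^] (i1 + i2)"
          using yc by (simp add: nat_pow_mult)
        moreover have "k1 \<otimes> k2 \<in> K" using z1 z2 subK by (simp add: subgroup.m_closed)
        ultimately show ?thesis using memK' by blast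
      qed
    qed
    have CK': "C \<inter> K' \<subseteq> {\<one>}"
    proof
      fix z assume zz: "z \<in> C \<inter> K'"
      then obtain u :: nat where u: "z = g [^] u" by (auto simp: C_def)
      obtain k0 and i :: nat where k0: "k0 \<in> K" "z = k0 \<otimes> y [^] i" using zz memK' by blast
      have k0c: "k0 \<in> carrier G" using k0 Ksub by auto
      define q r where "q = i div p" and "r = i mod p"
      have yi: "y [^] i = (y [^] p) [^] q \<otimes> y [^] r"
      proof -
        have "i = p * q + r" by (simp add: q_def r_def)
        then show ?thesis using yc by (simp add: nat_pow_mult[symmetric] nat_pow_pow)
      qed
      have yqc: "(y [^] p) [^] q \<in> carrier G" using yc by simp
      have yr: "y [^] r = inv (k0 \<otimes> (y [^] p) [^] q) \<otimes> g [^] u"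
      proof -
        have gu: "g [^] u = (k0 \<otimes> (y [^] p) [^] q) \<otimes> y [^] r" using u k0 yi k0c yqc yc by (simp add: m_assoc)
        have Pc: "k0 \<otimes> (y [^] p) [^] q \<in> carrier G" using k0c yqc by simp
        have "inv (k0 \<otimes> (y [^] p) [^] q) \<otimes> ((k0 \<otimes> (y [^] p) [^] q) \<otimes> y [^] r) = y [^] r"
          using Pc yc by (simp add: m_assoc[symmetric])
        then show ?thesis using gu by simp
      qed
      have r0: "r = 0"
      proof (rule ccontr)
        assume r0: "r \<noteq> 0"
        have rp: "r < p" using p2 by (simp add: r_def)
        have "gcd r p = 1"
        proof -
          have "coprime p r" using pp r0 rp by (simp add: prime_imp_coprime nat_dvd_not_less)
          then show ?thesis by (simp add: coprime_commute)
        qed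
        then obtain vv w where vw: "r * vv = p * w + 1" using bezout_nat[OF r0, of p] by auto
        have "inv (k0 \<otimes> (y [^] p) [^] q) \<in> K"
          using k0 ypK subK by (simp add: subgroup.m_closed subgroup.m_inv_closed)
        then have "y [^] r \<in> H" using yr KH CH g Hmult by (auto simp: C_def m_comm)
        then have h1: "(y [^] r) [^] vv \<in> H" by (rule Hpow)
        have h2: "inv ((y [^] p) [^] w) \<in> H" using KH ypK subK by (simp add: subgroup.m_inv_closed)
        have "(y [^] r) [^] vv = (y [^] p) [^] w \<otimes> y" using yc vw by (simp add: nat_pow_pow nat_pow_mult[symmetric])
        then have "y = inv ((y [^] p) [^] w) \<otimes> (y [^] r) [^] vv" using yc by (simp add: m_assoc[symmetric])
        then have "y \<in> H" using Hmult[OF h2 h1] by (rule ssubst)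
        then show False using yH by simp
      qed
      then have "y [^] i = (y [^] p) [^] q" using yi yqc by simp
      then have "z \<in> K" using k0 ypK subK by (simp add: subgroup.m_closed)
      then show "z \<in> {\<one>}" using zz CK by blast
    qed
    have K'S: "K' \<in> S" using subK' CK' by (simp add: S_def)
    have "K \<subseteq> K'"
    proof
      fix k0 assume "k0 \<in> K"
      moreover have "k0 = k0 \<otimes> y [^] (0::nat)" using \<open>k0 \<in> K\<close> Ksub by auto
      ultimately show "k0 \<in> K'" using memK' by blast
    qed
    moreover have "y \<in> K'"
    proof -
      have "y = \<one> \<otimes> y [^] (1::nat)" using yc by simp
      then show ?thesis using memK' subgroup.one_closed[OF subK] by blast
    qed
    moreover have "y \<notin> K" using KH yH by blast
    ultimately show False using Kmax K'S by blast
  qed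
  then show ?thesis using subK CK by (auto simp: H_def C_def)
qed

end


lemma tor_subgroup_generated:
  assumes "subgroup K G"
  shows "tor (subgroup_generated G K) n = {x \<in> K. x [^]\<^bsub>G\<^esub> n = \<one>\<^bsub>G\<^esub>}"
  using assms by (simp add: tor_def pow_subgroup_generated subgroup.carrier_subgroup_generated_subgroup)

lemma structure_thm:
  fixes p :: nat and \<alpha> :: "nat \<Rightarrow> nat"
  assumes pp: "Factorial_Ring.prime p"
  shows "\<And>G :: 'a monoid. comm_group G \<Longrightarrow> finite (carrier G) \<Longrightarrow> (\<forall>i<m. 1 \<le> \<alpha> i) \<Longrightarrow>
     (\<forall>i j. i \<le> j \<and> j < m \<longrightarrow> \<alpha> i \<le> \<alpha> j) \<Longrightarrow> card (carrier G) = p ^ (\<Sum>i<m. \<alpha> i) \<Longrightarrow>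
     (\<forall>k. card (tor G (p ^ k)) = p ^ (\<Sum>i<m. min k (\<alpha> i))) \<Longrightarrow>
     G \<cong> product_group {..<m} (\<lambda>i. integer_mod_group (p ^ \<alpha> i))"
proof (induct m)
  case (0 G)
  interpret G: comm_group G by (rule 0(1))
  have c1: "card (carrier G) = 1" using 0 by simp
  then obtain e where e: "carrier G = {e}" by (rule card_1_singletonE)
  have e1: "carrier G = {\<one>\<^bsub>G\<^esub>}" using e G.one_closed by auto
  let ?P = "product_group {..<0::nat} (\<lambda>i. integer_mod_group (p ^ \<alpha> i))"
  have gP: "group ?P" by (rule product_group) simp
  have cP: "carrier ?P = {\<one>\<^bsub>?P\<^esub>}" by (auto simp: PiE_iff)
  have "(\<lambda>x. \<one>\<^bsub>?P\<^esub>) \<in> iso G ?P"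
  proof (rule isoI)
    show "(\<lambda>x. \<one>\<^bsub>?P\<^esub>) \<in> hom G ?P" by (rule trivial_hom[OF gP])
    show "bij_betw (\<lambda>x. \<one>\<^bsub>?P\<^esub>) (carrier G) (carrier ?P)"
      unfolding e1 cP by (simp add: bij_betw_def)
  qed
  then show ?case by (rule is_isoI)
next
  case (Suc m G)
  interpret G: comm_group G by (rule Suc.prems(1))
  have p2: "2 \<le> p" using pp prime_ge_2_nat by blast
  have p1: "p > 1" using p2 by simp
  define a where "a = \<alpha> m"
  have a1: "1 \<le> a" using Suc.prems(3) by (simp add: a_def)
  have ale: "\<alpha> i \<le> a" if "i < Suc m" for i using Suc.prems(4) that by (simp add: a_def)
  have tors: "\<And>k. card (tor G (p ^ k)) = p ^ (\<Sum>i<Suc m. min k (\<alpha> i))" using Suc.prems(6) by blast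
  have fin: "finite (carrier G)" by (rule Suc.prems(2))
  have sa: "(\<Sum>i<Suc m. min a (\<alpha> i)) = (\<Sum>i<Suc m. \<alpha> i)"
  proof (rule sum.cong)
    fix i assume "i \<in> {..<Suc m}"
    then show "min a (\<alpha> i) = \<alpha> i" using ale[of i] by simp
  qed simp
  have torG: "tor G (p ^ a) = carrier G"
  proof (rule card_seteq[OF fin])
    show "tor G (p ^ a) \<subseteq> carrier G" by (auto simp: tor_def)
    show "card (carrier G) \<le> card (tor G (p ^ a))" using tors[of a] sa Suc.prems(5) by simp
  qed
  have expo: "\<And>x. x \<in> carrier G \<Longrightarrow> x [^]\<^bsub>G\<^esub> (p ^ a) = \<one>\<^bsub>G\<^esub>"
    using torG by (auto simp: tor_def)
  have "\<exists>g\<in>carrier G. G.ord g = p ^ a"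
  proof (rule ccontr)
    assume no: "\<not> (\<exists>g\<in>carrier G. G.ord g = p ^ a)"
    have "x [^]\<^bsub>G\<^esub> (p ^ (a - 1)) = \<one>\<^bsub>G\<^esub>" if x: "x \<in> carrier G" for x
    proof -
      have "G.ord x dvd p ^ a" using expo[OF x] G.pow_eq_id[OF x] by simp
      then obtain i where i: "i \<le> a" "G.ord x = p ^ i" using divides_primepow_nat[OF pp] by blast
      have "i \<noteq> a" using i no x by auto
      then have "i \<le> a - 1" using i by simp
      then have "G.ord x dvd p ^ (a - 1)" using i by (simp add: le_imp_power_dvd)
      then show ?thesis using G.pow_eq_id[OF x] by simp
    qed
    then have "tor G (p ^ (a - 1)) = carrier G" by (auto simp: tor_def)
    then have eq: "p ^ (\<Sum>i<Suc m. min (a - 1) (\<alpha> i)) = p ^ (\<Sum>i<Suc m. \<alpha> i)"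
      using tors[of "a - 1"] Suc.prems(5) by simp
    have "(\<Sum>i<Suc m. min (a - 1) (\<alpha> i)) < (\<Sum>i<Suc m. \<alpha> i)"
    proof (rule sum_strict_mono_ex1)
      show "\<forall>x\<in>{..<Suc m}. min (a - 1) (\<alpha> x) \<le> \<alpha> x" by simp
      show "\<exists>x\<in>{..<Suc m}. min (a - 1) (\<alpha> x) < \<alpha> x"
        using a1 by (intro bexI[of _ m]) (auto simp: a_def)
    qed simp
    then have "p ^ (\<Sum>i<Suc m. min (a - 1) (\<alpha> i)) < p ^ (\<Sum>i<Suc m. \<alpha> i)"
      using p1 by (simp add: power_strict_increasing)
    then show False using eq by simp
  qed
  then obtain g where g: "g \<in> carrier G" and og: "G.ord g = p ^ a" by blast
  define C where "C = range (\<lambda>n::nat. g [^]\<^bsub>G\<^esub> n)"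
  have gq: "g [^]\<^bsub>G\<^esub> (p ^ a) = \<one>\<^bsub>G\<^esub>" using expo[OF g] .
  have subC: "subgroup C G" unfolding C_def using G.cyc_subgroup[OF g gq] p2 by simp
  obtain K where subK: "subgroup K G" and CK: "C \<inter> K \<subseteq> {\<one>\<^bsub>G\<^esub>}" and CKG: "C <#>\<^bsub>G\<^esub> K = carrier G"
    using G.complement[OF fin pp g og a1 expo] unfolding C_def by blast
  define Cg where "Cg = subgroup_generated G C"
  define Kg where "Kg = subgroup_generated G K"
  have gCg: "group Cg" unfolding Cg_def by simp
  have gKg: "group Kg" unfolding Kg_def by simp
  have carK: "carrier Kg = K" unfolding Kg_def using subK by (simp add: subgroup.carrier_subgroup_generated_subgroup)
  interpret gds: group_disjoint_sum G C K
    by (simp add: group_disjoint_sum_def G.is_group subC subK)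
  have iso1: "(\<lambda>(x, y). x \<otimes>\<^bsub>G\<^esub> y) \<in> iso (Cg \<times>\<times> Kg) G"
    unfolding Cg_def Kg_def using gds.iso_group_mul[OF Suc.prems(1)] CK CKG by simp
  have iso2: "integer_mod_group (p ^ a) \<cong> Cg"
    unfolding Cg_def C_def using G.cyclic_iso[OF g og] p2 by (intro is_isoI) simp
  have gZ: "group (integer_mod_group (p ^ a))" by simp
  have torK: "card (tor Kg (p ^ k)) = p ^ (\<Sum>i<m. min k (\<alpha> i))" for k
  proof -
    have "card (tor G (p ^ k)) = card (tor (Cg \<times>\<times> Kg) (p ^ k))"
      using iso_tor_card[OF iso1] gCg gKg G.is_group by (simp add: DirProd_group)
    also have "\<dots> = card (tor Cg (p ^ k)) * card (tor Kg (p ^ k))"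
      by (simp add: tor_DirProd card_cartesian_product)
    also have "card (tor Cg (p ^ k)) = card (tor (integer_mod_group (p ^ a)) (p ^ k))"
      using is_iso_tor_card[OF iso2 gZ gCg] by simp
    also have "\<dots> = p ^ min k a" by (rule card_tor_Zmod[OF p1])
    finally have "p ^ (\<Sum>i<Suc m. min k (\<alpha> i)) = p ^ min k a * card (tor Kg (p ^ k))"
      using tors by simp
    then have "p ^ min k a * p ^ (\<Sum>i<m. min k (\<alpha> i)) = p ^ min k a * card (tor Kg (p ^ k))"
      by (simp add: a_def power_add mult.commute)
    then show ?thesis using p1 by simp
  qed
  have cKg: "card (carrier Kg) = p ^ (\<Sum>i<m. \<alpha> i)"
  proof -
    have "tor Kg (p ^ a) = carrier Kg"
      unfolding Kg_def using subK expo subgroup.subset[OF subK]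
      by (auto simp: tor_subgroup_generated subgroup.carrier_subgroup_generated_subgroup)
    moreover have "(\<Sum>i<m. min a (\<alpha> i)) = (\<Sum>i<m. \<alpha> i)"
    proof (rule sum.cong)
      fix i assume "i \<in> {..<m}"
      then show "min a (\<alpha> i) = \<alpha> i" using ale[of i] by simp
    qed simp
    ultimately show ?thesis using torK[of a] by simp
  qed
  have cgKg: "comm_group Kg" unfolding Kg_def by (rule G.abelian_subgroup_generated[OF Suc.prems(1)])
  have finKg: "finite (carrier Kg)" unfolding carK using subgroup.subset[OF subK] fin by (rule finite_subset)
  have IH: "Kg \<cong> product_group {..<m} (\<lambda>i. integer_mod_group (p ^ \<alpha> i))"
    using Suc.hyps[OF cgKg finKg] Suc.prems(3,4) cKg torK by simp
  have "G \<cong> Cg \<times>\<times> Kg"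
    using iso1 DirProd_group[OF gCg gKg] by (metis is_isoI group.iso_sym)
  also have "Cg \<times>\<times> Kg \<cong> integer_mod_group (p ^ a) \<times>\<times> product_group {..<m} (\<lambda>i. integer_mod_group (p ^ \<alpha> i))"
    using group.DirProd_iso_trans[OF gCg group.iso_sym[OF gZ iso2] IH] .
  also have "integer_mod_group (p ^ a) \<times>\<times> product_group {..<m} (\<lambda>i. integer_mod_group (p ^ \<alpha> i))
      \<cong> product_group {..<Suc m} (\<lambda>i. integer_mod_group (p ^ \<alpha> i))"
    using iso_extend_product[of "\<lambda>i. integer_mod_group (p ^ \<alpha> i)" m] unfolding a_def
    by (intro is_isoI) simp
  finally show ?case .
qed


theorem theorem2p5:
  fixes A M :: "'a monoid" and p :: nat
  assumes brace: "left_brace A M"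
    and fin: "finite (carrier A)"
    and p: "Factorial_Ring.prime p"
  shows "(\<forall>(m::nat) (\<alpha>::nat \<Rightarrow> nat).
            0 < m \<and> m + 2 \<le> p \<and> (\<forall>i<m. 1 \<le> \<alpha> i) \<and>
            (\<forall>i j. i \<le> j \<and> j < m \<longrightarrow> \<alpha> i \<le> \<alpha> j) \<and>
            A \<cong> product_group {..<m} (\<lambda>i. integer_mod_group (p ^ \<alpha> i))
          \<longrightarrow> (\<forall>x\<in>carrier A. group.ord M x = group.ord A x) \<and>
              (comm_group M \<longrightarrow> M \<cong> A))
       \<and> (\<forall>n::nat. card (carrier A) = p ^ n \<and> n + 2 \<le> p
          \<longrightarrow> (\<forall>x\<in>carrier A. group.ord M x = group.ord A x))"
proof -
  have bl: "brace_loc A M" using brace by (simp add: brace_loc_def)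
  have cgA: "comm_group A" and gM: "group M" and carr: "carrier M = carrier A"
    using brace by (auto simp: left_brace_def)
  have gA: "group A" using cgA by (simp add: comm_group_def)
  have p2: "2 \<le> p" using p prime_ge_2_nat by blast
  have p1: "p > 1" using p2 by simp
  have P1: "(\<forall>x\<in>carrier A. group.ord M x = group.ord A x) \<and> (comm_group M \<longrightarrow> M \<cong> A)" if
      m: "0 < m" "m + 2 \<le> p" "\<forall>i<m. 1 \<le> \<alpha> i" "\<forall>i j. i \<le> j \<and> j < m \<longrightarrow> \<alpha> i \<le> \<alpha> j"
      and iso: "A \<cong> product_group {..<m} (\<lambda>i. integer_mod_group (p ^ \<alpha> i))"
    for m \<alpha>
  proof -
    let ?P = "product_group {..<m} (\<lambda>i. integer_mod_group (p ^ \<alpha> i))"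
    have gP: "group ?P" by (rule product_group) simp
    have cardA: "card (carrier A) = p ^ (\<Sum>i<m. \<alpha> i)"
      using iso_same_card[OF iso] card_P[OF p1] by simp
    have ordA: "order A = p ^ (\<Sum>i<m. \<alpha> i)" using cardA by (simp add: order_def)
    have torA: "card (tor A (p ^ k)) = p ^ (\<Sum>i<m. min k (\<alpha> i))" for k
      using is_iso_tor_card[OF iso gA gP] card_tor_P[OF p1] by simp
    have s1: "(\<Sum>i<m. min 1 (\<alpha> i)) = m"
    proof -
      have "(\<Sum>i<m. min 1 (\<alpha> i)) = (\<Sum>i<m. (1::nat))"
        by (rule sum.cong) (use m(3) in auto)
      then show ?thesis by simp
    qed
    have small: "card {x \<in> carrier A. x [^]\<^bsub>A\<^esub> p = \<one>\<^bsub>A\<^esub>} \<le> p ^ (p - 2)"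
    proof -
      have "card {x \<in> carrier A. x [^]\<^bsub>A\<^esub> p = \<one>\<^bsub>A\<^esub>} = p ^ m"
        using torA[of 1] s1 by (simp add: tor_def)
      also have "\<dots> \<le> p ^ (p - 2)" using m(2) p2 by (intro power_increasing) auto
      finally show ?thesis .
    qed
    have oe: "\<forall>x\<in>carrier A. group.ord M x = group.ord A x"
      using brace_loc.ord_eq[OF bl fin p ordA small] by blast
    have cm: "comm_group M \<longrightarrow> M \<cong> A"
    proof
      assume cgM: "comm_group M"
      have torMA: "tor M n = tor A n" for n
      proof -
        have "x [^]\<^bsub>M\<^esub> n = \<one>\<^bsub>M\<^esub> \<longleftrightarrow> x [^]\<^bsub>A\<^esub> n = \<one>\<^bsub>A\<^esub>" if x: "x \<in> carrier A" for x
        proof -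
          have xM: "x \<in> carrier M" using x carr by simp
          show ?thesis using group.pow_eq_id[OF gM xM] group.pow_eq_id[OF gA x] oe x by simp
        qed
        then show ?thesis using carr by (auto simp: tor_def)
      qed
      have "M \<cong> ?P"
        by (rule structure_thm[OF p]) (use cgM fin carr m(3,4) cardA torA torMA in auto)
      also have "?P \<cong> A" using group.iso_sym[OF gA iso] .
      finally show "M \<cong> A" .
    qed
    show ?thesis using oe cm by blast
  qed
  have P2: "\<forall>x\<in>carrier A. group.ord M x = group.ord A x"
    if n: "card (carrier A) = p ^ n" "n + 2 \<le> p" for n
  proof -
    have ordA: "order A = p ^ n" using n by (simp add: order_def)
    have "card {x \<in> carrier A. x [^]\<^bsub>A\<^esub> p = \<one>\<^bsub>A\<^esub>} \<le> card (carrier A)"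
      using fin by (intro card_mono) auto
    also have "\<dots> \<le> p ^ (p - 2)" using n p2 by (simp add: power_increasing)
    finally have small: "card {x \<in> carrier A. x [^]\<^bsub>A\<^esub> p = \<one>\<^bsub>A\<^esub>} \<le> p ^ (p - 2)" .
    show ?thesis using brace_loc.ord_eq[OF bl fin p ordA small] by blast
  qed
  show ?thesis using P1 P2 by blast
qed

end
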